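(* Let $Z\subseteq(\mathbb P^1)^d$ be the common vanishing locus of the multi-homogeneous polynomials $P^h$, where $P$ ranges over all linear forms $P=\sum_{\lambda\in\Phi^+}c_\lambda x_\lambda$ with $\sum_{\lambda}c_\lambda\lambda(h)=0$ for all $h\in\mathfrak h$. For a point $x=(x_\lambda)_{\lambda\in\Phi^+}\in Z$, put $\mathrm{Fin}=\{\lambda\in\Phi^+: x_\lambda\neq\infty\}$. Then $\mathrm{Fin}\cup(-\mathrm{Fin})$ is a closed root subsystem of $\Phi$.
   Context: Let $\mathfrak g$ be a complex semisimple Lie algebra, $\mathfrak h$ a Cartan subalgebra, $r=\dim\mathfrak h$, $\Phi\subset\mathfrak h^*$ its root system, $\Phi^+$ a fixed set of positive roots, $d=|\Phi^+|$. Points of $(\mathbb P^1)^d$ are written $x=(x_\lambda)_{\lambda\in\Phi^+}$ with $x_\lambda=[x_{\lambda,0}:x_{\lambda,1}]$; $\mathbb C$ is identified with $\{x_0\neq 0\}\subset\mathbb P^1$ via $c\mapsto [1:c]$, and $\infty=[0:1]$. For a linear form $P=\sum_\lambda c_\lambda x_\lambda$ with support $\mathrm{supp}(P)=\{\lambda:c_\lambda\neq0\}$, its multi-homogenization is $P^h=\sum_{\lambda\in\mathrm{supp}P}c_\lambda x_{\lambda,1}\prod_{\mu\in\mathrm{supp}P,\mu\neq\lambda}x_{\mu,0}$. A root subsystem $\Psi\subseteq\Phi$ is closed if $\lambda,\mu\in\Psi$ and $\lambda+\mu\in\Phi$ imply $\lambda+\mu\in\Psi$. *)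

theory Defs
  imports "HOL-Analysis.Analysis"
begin

(* Roots are modelled as vectors of a real Euclidean space 'a (the real form of h^*,
   identified with h via the Killing form). *)

definition root_reflect :: "'a::euclidean_space \<Rightarrow> 'a \<Rightarrow> 'a" where
  "root_reflect \<alpha> \<beta> = \<beta> - (2 * (\<beta> \<bullet> \<alpha>) / (\<alpha> \<bullet> \<alpha>)) *\<^sub>R \<alpha>"

(* reduced crystallographic root system spanning the ambient space (= root system of a
   complex semisimple Lie algebra, by the classification) *)
definition root_system :: "'a::euclidean_space set \<Rightarrow> bool" where
  "root_system \<Phi> \<longleftrightarrow>
     finite \<Phi> \<and> 0 \<notin> \<Phi> \<and> span \<Phi> = UNIV \<and>
     (\<forall>\<alpha>\<in>\<Phi>. \<forall>\<beta>\<in>\<Phi>. root_reflect \<alpha> \<beta> \<in> \<Phi>) \<and>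
     (\<forall>\<alpha>\<in>\<Phi>. \<forall>\<beta>\<in>\<Phi>. 2 * (\<beta> \<bullet> \<alpha>) / (\<alpha> \<bullet> \<alpha>) \<in> \<int>) \<and>
     (\<forall>\<alpha>\<in>\<Phi>. \<forall>c::real. c *\<^sub>R \<alpha> \<in> \<Phi> \<longrightarrow> c = 1 \<or> c = -1)"

definition positive_system :: "'a::euclidean_space set \<Rightarrow> 'a set \<Rightarrow> bool" where
  "positive_system \<Phi> \<Phi>p \<longleftrightarrow>
     (\<exists>f::'a. (\<forall>\<alpha>\<in>\<Phi>. f \<bullet> \<alpha> \<noteq> 0) \<and> \<Phi>p = {\<alpha>\<in>\<Phi>. f \<bullet> \<alpha> > 0})"

definition lf_supp :: "'a set \<Rightarrow> ('a \<Rightarrow> complex) \<Rightarrow> 'a set" where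
  "lf_supp \<Phi>p c = {l\<in>\<Phi>p. c l \<noteq> 0}"

(* multi-homogenization P^h evaluated at homogeneous coordinates x_lambda = (x_{lambda,0}, x_{lambda,1}) *)
definition homogenize_eval :: "'a set \<Rightarrow> ('a \<Rightarrow> complex) \<Rightarrow> ('a \<Rightarrow> complex \<times> complex) \<Rightarrow> complex" where
  "homogenize_eval \<Phi>p c x =
     (\<Sum>l\<in>lf_supp \<Phi>p c. c l * snd (x l) * (\<Prod>\<mu>\<in>lf_supp \<Phi>p c - {l}. fst (x \<mu>)))"

definition root_subsystem :: "'a::euclidean_space set \<Rightarrow> 'a set \<Rightarrow> bool" where
  "root_subsystem \<Phi> \<Psi> \<longleftrightarrow> \<Psi> \<subseteq> \<Phi> \<and> (\<forall>\<alpha>\<in>\<Psi>. - \<alpha> \<in> \<Psi>) \<and>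
     (\<forall>\<alpha>\<in>\<Psi>. \<forall>\<beta>\<in>\<Psi>. root_reflect \<alpha> \<beta> \<in> \<Psi>)"

definition closed_root_subsystem :: "'a::euclidean_space set \<Rightarrow> 'a set \<Rightarrow> bool" where
  "closed_root_subsystem \<Phi> \<Psi> \<longleftrightarrow> root_subsystem \<Phi> \<Psi> \<and>
     (\<forall>l\<in>\<Psi>. \<forall>\<mu>\<in>\<Psi>. l + \<mu> \<in> \<Phi> \<longrightarrow> l + \<mu> \<in> \<Psi>)"

end

theory Submission
  imports Defs
begin

lemma key:
  fixes \<Phi>p :: "'a::euclidean_space set"
    and x :: "'a \<Rightarrow> complex \<times> complex"
  assumes fin: "finite \<Phi>p"
    and nz: "\<forall>l\<in>\<Phi>p. x l \<noteq> (0, 0)"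
    and H: "\<forall>c::'a \<Rightarrow> complex.
           (\<forall>h::'a. (\<Sum>l\<in>\<Phi>p. c l * complex_of_real (l \<bullet> h)) = 0)
           \<longrightarrow> homogenize_eval \<Phi>p c x = 0"
    and l: "l \<in> \<Phi>p" "l \<in> span {l\<in>\<Phi>p. fst (x l) \<noteq> 0}"
  shows "fst (x l) \<noteq> 0"
proof
  assume l0: "fst (x l) = 0"
  define F where "F = {l\<in>\<Phi>p. fst (x l) \<noteq> 0}"
  have fF: "finite F" using fin by (simp add: F_def)
  have lF: "l \<notin> F" using l0 by (simp add: F_def)
  have FP: "F \<subseteq> \<Phi>p - {l}" using lF by (auto simp: F_def)
  obtain u where u: "l = (\<Sum>v\<in>F. u v *\<^sub>R v)"
    using l(2) span_finite[OF fF] unfolding F_def[symmetric] by auto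
  define d where "d \<mu> = (if \<mu> = l then -1 else if \<mu> \<in> F then u \<mu> else (0::real))" for \<mu>
  define c where "c \<mu> = complex_of_real (d \<mu>)" for \<mu>
  have s1: "(\<Sum>\<mu>\<in>\<Phi>p - {l}. d \<mu> *\<^sub>R \<mu>) = (\<Sum>v\<in>F. u v *\<^sub>R v)"
    by (rule sum.mono_neutral_cong_right) (use fin FP lF in \<open>auto simp: d_def\<close>)
  have s0: "(\<Sum>\<mu>\<in>\<Phi>p. d \<mu> *\<^sub>R \<mu>) = 0"
    using sum.remove[OF fin l(1), of "\<lambda>\<mu>. d \<mu> *\<^sub>R \<mu>"] s1 u by (simp add: d_def)
  have "\<forall>h::'a. (\<Sum>\<mu>\<in>\<Phi>p. c \<mu> * complex_of_real (\<mu> \<bullet> h)) = 0"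
  proof
    fix h :: 'a
    have "(\<Sum>\<mu>\<in>\<Phi>p. c \<mu> * complex_of_real (\<mu> \<bullet> h)) = complex_of_real ((\<Sum>\<mu>\<in>\<Phi>p. d \<mu> *\<^sub>R \<mu>) \<bullet> h)"
      by (simp add: c_def inner_sum_left)
    then show "(\<Sum>\<mu>\<in>\<Phi>p. c \<mu> * complex_of_real (\<mu> \<bullet> h)) = 0" using s0 by simp
  qed
  with H have E: "homogenize_eval \<Phi>p c x = 0" by blast
  define S where "S = lf_supp \<Phi>p c"
  have fS: "finite S" using fin by (simp add: S_def lf_supp_def)
  have lS: "l \<in> S" using l(1) by (simp add: S_def lf_supp_def c_def d_def)
  have SF: "S - {l} \<subseteq> F" by (auto simp: S_def lf_supp_def c_def d_def split: if_splits)
  have z: "(\<Sum>\<mu>\<in>S - {l}. c \<mu> * snd (x \<mu>) * (\<Prod>\<nu>\<in>S - {\<mu>}. fst (x \<nu>))) = 0"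
  proof (rule sum.neutral, rule ballI)
    fix \<mu> assume "\<mu> \<in> S - {l}"
    then have "l \<in> S - {\<mu>}" using lS by auto
    then have "(\<Prod>\<nu>\<in>S - {\<mu>}. fst (x \<nu>)) = 0" using fS l0 by (intro prod_zero) auto
    then show "c \<mu> * snd (x \<mu>) * (\<Prod>\<nu>\<in>S - {\<mu>}. fst (x \<nu>)) = 0" by simp
  qed
  have "snd (x l) \<noteq> 0" using nz l(1) l0 by (cases "x l") auto
  moreover have "(\<Prod>\<nu>\<in>S - {l}. fst (x \<nu>)) \<noteq> 0"
    using SF fS by (auto simp: F_def)
  moreover have "c l = -1" by (simp add: c_def d_def)
  ultimately have "c l * snd (x l) * (\<Prod>\<nu>\<in>S - {l}. fst (x \<nu>)) \<noteq> 0" by simp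
  moreover have "homogenize_eval \<Phi>p c x = c l * snd (x l) * (\<Prod>\<nu>\<in>S - {l}. fst (x \<nu>))
     + (\<Sum>\<mu>\<in>S - {l}. c \<mu> * snd (x \<mu>) * (\<Prod>\<nu>\<in>S - {\<mu>}. fst (x \<nu>)))"
    unfolding homogenize_eval_def S_def[symmetric] using sum.remove[OF fS lS] by simp
  ultimately show False using E z by simp
qed

theorem mainTheorem2:
  fixes \<Phi> \<Phi>p :: "'a::euclidean_space set"
    and x :: "'a \<Rightarrow> complex \<times> complex"
  assumes "root_system \<Phi>"
    and "positive_system \<Phi> \<Phi>p"
    and "\<forall>l\<in>\<Phi>p. x l \<noteq> (0, 0)"
    and "\<forall>c::'a \<Rightarrow> complex.
           (\<forall>h::'a. (\<Sum>l\<in>\<Phi>p. c l * complex_of_real (l \<bullet> h)) = 0)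
           \<longrightarrow> homogenize_eval \<Phi>p c x = 0"
  shows "closed_root_subsystem \<Phi>
           ({l\<in>\<Phi>p. fst (x l) \<noteq> 0} \<union> uminus ` {l\<in>\<Phi>p. fst (x l) \<noteq> 0})"
proof -
  define F where "F = {l\<in>\<Phi>p. fst (x l) \<noteq> 0}"
  have RS: "finite \<Phi>" "\<forall>\<alpha>\<in>\<Phi>. \<forall>\<beta>\<in>\<Phi>. root_reflect \<alpha> \<beta> \<in> \<Phi>" "0 \<notin> \<Phi>"
    using assms(1) by (auto simp: root_system_def)
  obtain f where f: "\<forall>\<alpha>\<in>\<Phi>. f \<bullet> \<alpha> \<noteq> 0" "\<Phi>p = {\<alpha>\<in>\<Phi>. f \<bullet> \<alpha> > 0}"
    using assms(2) by (auto simp: positive_system_def)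
  have neg: "- \<alpha> \<in> \<Phi>" if "\<alpha> \<in> \<Phi>" for \<alpha>
  proof -
    have "\<alpha> \<bullet> \<alpha> \<noteq> 0" using that RS(3) by auto
    then have "root_reflect \<alpha> \<alpha> = - \<alpha>" by (simp add: root_reflect_def algebra_simps scaleR_2)
    then show ?thesis using RS(2) that by metis
  qed
  have finP: "finite \<Phi>p" using RS(1) f(2) by simp
  have K: "\<beta> \<in> F \<union> uminus ` F" if "\<beta> \<in> \<Phi>" "\<beta> \<in> span F" for \<beta>
  proof (cases "f \<bullet> \<beta> > 0")
    case True
    then have "\<beta> \<in> \<Phi>p" using f that by auto
    then have "fst (x \<beta>) \<noteq> 0" using key[OF finP assms(3) assms(4)] that(2) unfolding F_def by blast
    then show ?thesis using \<open>\<beta> \<in> \<Phi>p\<close> by (auto simp: F_def)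
  next
    case False
    then have "f \<bullet> (-\<beta>) > 0" using f(1) that(1) by (auto simp: inner_minus_right)
    then have b: "-\<beta> \<in> \<Phi>p" using f neg that by auto
    have "-\<beta> \<in> span F" using that(2) span_neg by blast
    then have "fst (x (-\<beta>)) \<noteq> 0" using key[OF finP assms(3) assms(4) b] unfolding F_def by blast
    then have "-\<beta> \<in> F" using b by (auto simp: F_def)
    then show ?thesis by (metis UnI2 image_eqI minus_minus)
  qed
  have sub: "F \<union> uminus ` F \<subseteq> \<Phi>" using f(2) neg by (auto simp: F_def)
  have spn: "F \<union> uminus ` F \<subseteq> span F" using span_base span_neg by fastforce
  show ?thesis
    unfolding F_def[symmetric] closed_root_subsystem_def root_subsystem_def
  proof (intro conjI ballI impI sub)
    fix \<alpha> assume "\<alpha> \<in> F \<union> uminus ` F"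
    then show "- \<alpha> \<in> F \<union> uminus ` F" by auto
  next
    fix \<alpha> \<beta> assume a: "\<alpha> \<in> F \<union> uminus ` F" and b: "\<beta> \<in> F \<union> uminus ` F"
    show "root_reflect \<alpha> \<beta> \<in> F \<union> uminus ` F"
    proof (rule K)
      show "root_reflect \<alpha> \<beta> \<in> \<Phi>" using RS(2) sub a b by blast
      show "root_reflect \<alpha> \<beta> \<in> span F" using spn a b unfolding root_reflect_def
        by (intro span_diff span_scale) auto
    qed
  next
    fix \<alpha> \<beta> assume a: "\<alpha> \<in> F \<union> uminus ` F" and b: "\<beta> \<in> F \<union> uminus ` F" and "\<alpha> + \<beta> \<in> \<Phi>"
    then show "\<alpha> + \<beta> \<in> F \<union> uminus ` F" using spn by (intro K) (auto intro!: span_add)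
  qed
qed

end
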